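(* Let $\mathcal M\subseteq\bigcup_{K\ge1}\mathcal F_K\times\mathcal Q_K$ satisfy: (1) $K(F)<M$ for all $(F,Q)\in\mathcal M$; (2) for every $(F,Q)\in\mathcal M$, $\mathcal F_{K(F)}^{\mathrm{an}}\times\{Q\}\subseteq\mathcal M$. Then $\mathcal M$ is identifiable if and only if (a) for all $(F^1,Q^1),(F^2,Q^2)\in\mathcal M$ with $F^1Q^1=F^2Q^2$ we have $\mathrm{cone}(Q^1)=\mathrm{cone}(Q^2)$, and (b) for every $(F,Q)\in\mathcal M$ the rows of $Q$ are linearly independent.
   Context: Fix positive integers $M$ and $N$. For a positive integer $K$, $\mathcal F_K$ is the set of real $M\times K$ matrices with all entries in $[0,1]$, and $\mathcal Q_K$ is the set of real $K\times N$ matrices with entries in $[0,1]$ each of whose columns sums to $1$. $K(F)$ is the number of columns of $F$. $\mathcal F_K^{\mathrm{an}}$ is the set of $F\in\mathcal F_K$ such that for every $k\in\{1,\dots,K\}$ there is a row $s$ with $F_{sk}>0$ and $F_{s\ell}=0$ for all $\ell\ne k$. For a matrix $A$ with nonnegative entries, $\mathrm{cone}(A)$ is the set of all linear combinations with nonnegative coefficients of the rows of $A$. $(F^1,Q^1)\sim(F^2,Q^2)$ means $F^1,F^2$ have the same number $K$ of columns and there is a permutation $\pi$ of $\{1,\dots,K\}$ with $F^2_{sk}=F^1_{s\pi(k)}$ and $Q^2_{ki}=Q^1_{\pi(k)i}$ for all $s,k,i$. $\mathcal M$ is identifiable if for all $(F^1,Q^1),(F^2,Q^2)\in\mathcal M$,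 $F^1Q^1=F^2Q^2$ implies $(F^1,Q^1)\sim(F^2,Q^2)$. *)

theory Defs
  imports "Jordan_Normal_Form.Matrix"
begin

(* Matrices are JNF matrices; indices are 0-based (row s < M, column k < K). *)

definition Fset :: "nat \<Rightarrow> nat \<Rightarrow> real mat set" where
  "Fset M K = {F \<in> carrier_mat M K.
     \<forall>s<M. \<forall>k<K. 0 \<le> F $$ (s,k) \<and> F $$ (s,k) \<le> 1}"

definition Qset :: "nat \<Rightarrow> nat \<Rightarrow> real mat set" where
  "Qset K N = {Q \<in> carrier_mat K N.
     (\<forall>k<K. \<forall>i<N. 0 \<le> Q $$ (k,i) \<and> Q $$ (k,i) \<le> 1) \<and>
     (\<forall>i<N. (\<Sum>k<K. Q $$ (k,i)) = 1)}"

definition Fan :: "nat \<Rightarrow> nat \<Rightarrow> real mat set" where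
  "Fan M K = {F \<in> Fset M K.
     \<forall>k<K. \<exists>s<M. F $$ (s,k) > 0 \<and> (\<forall>l<K. l \<noteq> k \<longrightarrow> F $$ (s,l) = 0)}"

definition cone_rows :: "real mat \<Rightarrow> real vec set" where
  "cone_rows A = {v. \<exists>c::nat \<Rightarrow> real. (\<forall>i<dim_row A. 0 \<le> c i) \<and>
      v = vec (dim_col A) (\<lambda>j. \<Sum>i<dim_row A. c i * A $$ (i,j))}"

definition rows_lin_indep :: "real mat \<Rightarrow> bool" where
  "rows_lin_indep Q \<longleftrightarrow> (\<forall>c::nat \<Rightarrow> real.
     (\<forall>j<dim_col Q. (\<Sum>k<dim_row Q. c k * Q $$ (k,j)) = 0) \<longrightarrow> (\<forall>k<dim_row Q. c k = 0))"

definition perm_equiv :: "real mat \<times> real mat \<Rightarrow> real mat \<times> real mat \<Rightarrow> bool" where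
  "perm_equiv p1 p2 \<longleftrightarrow> (case p1 of (F1,Q1) \<Rightarrow> case p2 of (F2,Q2) \<Rightarrow>
     dim_col F1 = dim_col F2 \<and>
     (\<exists>\<pi>. \<pi> permutes {..<dim_col F1} \<and>
        (\<forall>s<dim_row F1. \<forall>k<dim_col F1. F2 $$ (s,k) = F1 $$ (s, \<pi> k)) \<and>
        (\<forall>k<dim_col F1. \<forall>i<dim_col Q1. Q2 $$ (k,i) = Q1 $$ (\<pi> k, i))))"

definition identifiable :: "(real mat \<times> real mat) set \<Rightarrow> bool" where
  "identifiable \<M> \<longleftrightarrow> (\<forall>F1 Q1 F2 Q2. (F1,Q1) \<in> \<M> \<longrightarrow> (F2,Q2) \<in> \<M> \<longrightarrow>
      F1 * Q1 = F2 * Q2 \<longrightarrow> perm_equiv (F1,Q1) (F2,Q2))"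

end

theory Submission
  imports Defs
begin

lemma mult_entry:
  assumes "F \<in> carrier_mat m K" "Q \<in> carrier_mat K n" "s<m" "i<n"
  shows "(F*Q)$$(s,i) = (\<Sum>k<K. F$$(s,k) * Q$$(k,i))"
  using assms by (simp add: scalar_prod_def atLeast0LessThan)

lemma sum_ind:
  assumes "k < (K::nat)"
  shows "(\<Sum>l<K. (if l = k then 1 else 0) * f l) = (f k :: real)"
    and "(\<Sum>l<K. (if k = l then 1 else 0) * f l) = (f k :: real)"
proof -
  have "(\<Sum>l<K. (if l = k then 1 else 0) * f l) = (\<Sum>l<K. if l = k then f l else 0)"
    by (rule sum.cong) auto
  also have "\<dots> = f k" using assms by simp
  finally show "(\<Sum>l<K. (if l = k then 1 else 0) * f l) = (f k :: real)" .
  have "(\<Sum>l<K. (if k = l then 1 else 0) * f l) = (\<Sum>l<K. if l = k then f l else 0)"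
    by (rule sum.cong) auto
  also have "\<dots> = f k" using assms by simp
  finally show "(\<Sum>l<K. (if k = l then 1 else 0) * f l) = (f k :: real)" .
qed

lemma cone_sub:
  assumes "\<pi> permutes {..<K}" "dim_row Q1 = K" "dim_row Q2 = K" "dim_col Q1 = dim_col Q2"
   "\<forall>k<K. \<forall>i<dim_col Q1. Q2$$(k,i) = Q1$$(\<pi> k,i)"
  shows "cone_rows Q1 \<subseteq> cone_rows Q2"
proof
  fix v assume "v \<in> cone_rows Q1"
  then obtain c where c: "\<forall>i<K. 0 \<le> c i" "v = vec (dim_col Q1) (\<lambda>j. \<Sum>i<K. c i * Q1$$(i,j))"
    using assms unfolding cone_rows_def by auto
  have eq: "\<forall>j<dim_col Q1. (\<Sum>i<K. c (\<pi> i) * Q2$$(i,j)) = (\<Sum>i<K. c i * Q1$$(i,j))"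
  proof (intro allI impI)
    fix j assume j: "j < dim_col Q1"
    have "(\<Sum>i<K. c (\<pi> i) * Q2$$(i,j)) = (\<Sum>i<K. c (\<pi> i) * Q1$$(\<pi> i,j))"
      using assms(5) j by simp
    also have "\<dots> = (\<Sum>i<K. c i * Q1$$(i,j))"
      using sum.reindex_bij_betw[OF permutes_imp_bij[OF assms(1)], of "\<lambda>i. c i * Q1$$(i,j)"] by simp
    finally show "(\<Sum>i<K. c (\<pi> i) * Q2$$(i,j)) = (\<Sum>i<K. c i * Q1$$(i,j))" .
  qed
  have nn: "\<forall>i<K. 0 \<le> c (\<pi> i)" using c(1) assms(1)
    by (metis lessThan_iff permutes_in_image)
  have "v = vec (dim_col Q2) (\<lambda>j. \<Sum>i<dim_row Q2. c (\<pi> i) * Q2$$(i,j))"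
    using c(2) eq assms(3,4) by (auto intro!: eq_vecI)
  then show "v \<in> cone_rows Q2" unfolding cone_rows_def using nn assms(3)
    by (auto intro!: exI[of _ "\<lambda>i. c (\<pi> i)"])
qed

lemma half:
  fixes a b :: "nat \<Rightarrow> nat \<Rightarrow> real"
  assumes a0: "\<forall>k<K2. \<forall>j<K1. 0 \<le> a k j" and b0: "\<forall>j<K1. \<forall>l<K2. 0 \<le> b j l"
  and AB: "\<forall>k<K2. \<forall>l<K2. (\<Sum>j<K1. a k j * b j l) = (if k = l then 1 else 0)"
  and BA: "\<forall>j<K1. \<forall>j'<K1. (\<Sum>l<K2. b j l * a l j') = (if j = j' then 1 else 0)"
  shows "\<forall>k<K2. \<exists>j<K1. a k j > 0"
    and "\<forall>k<K2. \<forall>j<K1. a k j > 0 \<longrightarrow> (\<forall>l<K2. l \<noteq> k \<longrightarrow> b j l = 0)"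
    and "K2 \<le> K1"
proof -
  show ex: "\<forall>k<K2. \<exists>j<K1. a k j > 0"
  proof (intro allI impI)
    fix k assume k: "k < K2"
    have "(\<Sum>j<K1. a k j * b j k) = 1" using AB k by simp
    then obtain j where j: "j \<in> {..<K1}" "a k j * b j k \<noteq> 0"
      using sum.not_neutral_contains_not_neutral[of "\<lambda>j. a k j * b j k" "{..<K1}"] by auto
    then have "a k j \<noteq> 0" by auto
    moreover have "0 \<le> a k j" using a0 k j by blast
    ultimately have "a k j > 0" by linarith
    then show "\<exists>j<K1. a k j > 0" using j by blast
  qed
  show P: "\<forall>k<K2. \<forall>j<K1. a k j > 0 \<longrightarrow> (\<forall>l<K2. l \<noteq> k \<longrightarrow> b j l = 0)"
  proof (intro allI impI)
    fix k j l assume k: "k < K2" and j: "j < K1" and pos: "a k j > 0" and l: "l < K2" and kl: "l \<noteq> k"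
    have "(\<Sum>j<K1. a k j * b j l) = 0" using AB k l kl by simp
    moreover have "\<forall>j'\<in>{..<K1}. 0 \<le> a k j' * b j' l" using a0 b0 k l by auto
    ultimately have "\<forall>j'\<in>{..<K1}. a k j' * b j' l = 0"
      using sum_nonneg_eq_0_iff[of "{..<K1}" "\<lambda>j'. a k j' * b j' l"] by auto
    then have "a k j * b j l = 0" using j by blast
    then show "b j l = 0" using pos by simp
  qed
  have exb: "\<forall>j<K1. \<exists>l<K2. b j l > 0"
  proof (intro allI impI)
    fix j assume j: "j < K1"
    have "(\<Sum>l<K2. b j l * a l j) = 1" using BA j by simp
    then obtain l where l: "l \<in> {..<K2}" "b j l * a l j \<noteq> 0"
      using sum.not_neutral_contains_not_neutral[of "\<lambda>l. b j l * a l j" "{..<K2}"] by auto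
    then have "b j l \<noteq> 0" by auto
    moreover have "0 \<le> b j l" using b0 l j by blast
    ultimately have "b j l > 0" by linarith
    then show "\<exists>l<K2. b j l > 0" using l by blast
  qed
  define \<sigma> where "\<sigma> k = (SOME j. j < K1 \<and> a k j > 0)" for k
  have \<sigma>: "\<sigma> k < K1 \<and> a k (\<sigma> k) > 0" if "k < K2" for k
    unfolding \<sigma>_def using ex that by (metis (mono_tags, lifting) someI_ex)
  have "inj_on \<sigma> {..<K2}"
  proof (rule inj_onI)
    fix k k' assume k: "k \<in> {..<K2}" and k': "k' \<in> {..<K2}" and e: "\<sigma> k = \<sigma> k'"
    have sk: "\<sigma> k < K1" "a k (\<sigma> k) > 0" using \<sigma> k by auto
    have sk': "\<sigma> k' < K1" "a k' (\<sigma> k) > 0" using \<sigma> k' e by auto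
    obtain l where l: "l < K2" "b (\<sigma> k) l > 0" using exb sk by blast
    have z1: "\<forall>l<K2. l \<noteq> k \<longrightarrow> b (\<sigma> k) l = 0" using P k sk by blast
    have z2: "\<forall>l<K2. l \<noteq> k' \<longrightarrow> b (\<sigma> k) l = 0" using P k' sk sk' by blast
    have "l = k" using z1 l by (metis less_irrefl)
    moreover have "l = k'" using z2 l by (metis less_irrefl)
    ultimately show "k = k'" by simp
  qed
  moreover have "\<sigma> ` {..<K2} \<subseteq> {..<K1}" using \<sigma> by auto
  ultimately show "K2 \<le> K1" using card_inj_on_le[of \<sigma> "{..<K2}" "{..<K1}"] by auto
qed

lemma comb:
  fixes a b :: "nat \<Rightarrow> nat \<Rightarrow> real"
  assumes a0: "\<forall>k<K2. \<forall>j<K1. 0 \<le> a k j" and b0: "\<forall>j<K1. \<forall>l<K2. 0 \<le> b j l"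
  and AB: "\<forall>k<K2. \<forall>l<K2. (\<Sum>j<K1. a k j * b j l) = (if k = l then 1 else 0)"
  and BA: "\<forall>j<K1. \<forall>j'<K1. (\<Sum>l<K2. b j l * a l j') = (if j = j' then 1 else 0)"
  shows "K1 = K2 \<and> (\<exists>\<pi>. \<pi> permutes {..<K2} \<and> (\<forall>k<K2. a k (\<pi> k) > 0 \<and> (\<forall>j<K2. j \<noteq> \<pi> k \<longrightarrow> a k j = 0)))"
proof -
  note h1 = half[OF a0 b0 AB BA]
  note h2 = half[OF b0 a0 BA AB]
  have K: "K1 = K2" using h1(3) h2(3) by simp
  define \<sigma> where "\<sigma> k = (SOME j. j < K1 \<and> a k j > 0)" for k
  have \<sigma>: "\<sigma> k < K1 \<and> a k (\<sigma> k) > 0" if "k < K2" for k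
    unfolding \<sigma>_def using h1(1) that by (metis (mono_tags, lifting) someI_ex)
  have inj: "inj_on \<sigma> {..<K2}"
  proof (rule inj_onI)
    fix k k' assume k: "k \<in> {..<K2}" and k': "k' \<in> {..<K2}" and e: "\<sigma> k = \<sigma> k'"
    obtain l where l: "l < K2" "b (\<sigma> k) l > 0" using h2(1) \<sigma> k by auto
    have "l = k" using h1(2) \<sigma>[of k] k l by force
    moreover have "l = k'" using h1(2) \<sigma>[of k'] k' l e by force
    ultimately show "k = k'" by simp
  qed
  have sub: "\<sigma> ` {..<K2} \<subseteq> {..<K2}" using \<sigma> K by auto
  have img: "\<sigma> ` {..<K2} = {..<K2}" using endo_inj_surj[OF _ sub inj] by simp
  have bij: "bij_betw \<sigma> {..<K2} {..<K2}" using inj img by (simp add: bij_betw_def)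
  define \<pi> where "\<pi> x = (if x < K2 then \<sigma> x else x)" for x
  have bij2: "bij_betw \<pi> {..<K2} {..<K2}" using bij by (rule bij_betw_cong[THEN iffD1, rotated]) (simp add: \<pi>_def)
  have perm: "\<pi> permutes {..<K2}" by (rule bij_imp_permutes[OF bij2]) (simp add: \<pi>_def)
  have "\<forall>k<K2. a k (\<pi> k) > 0 \<and> (\<forall>j<K2. j \<noteq> \<pi> k \<longrightarrow> a k j = 0)"
  proof (intro allI impI conjI)
    fix k assume k: "k < K2"
    show "a k (\<pi> k) > 0" using \<sigma> k by (simp add: \<pi>_def)
    fix j assume j: "j < K2" and jn: "j \<noteq> \<pi> k"
    show "a k j = 0"
    proof (rule ccontr)
      assume "a k j \<noteq> 0"
      then have pos: "a k j > 0" using a0 k j K by force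
      obtain k' where k': "k' < K2" "j = \<sigma> k'" using img j by (metis imageE lessThan_iff)
      have kk: "k' \<noteq> k" using jn k' k by (auto simp: \<pi>_def)
      obtain l where l: "l < K2" "b j l > 0" using h2(1) j K by auto
      have "l = k" using h1(2) pos k j K l by force
      moreover have "l = k'" using h1(2) \<sigma>[of k'] k' l by force
      ultimately show False using kk by simp
    qed
  qed
  then show ?thesis using K perm by blast
qed


lemma row_in_cone:
  assumes "Q1 \<in> carrier_mat K1 N" "Q2 \<in> carrier_mat K2 N" "cone_rows Q2 \<subseteq> cone_rows Q1"
  shows "\<exists>a. \<forall>k<K2. (\<forall>j<K1. 0 \<le> a k j) \<and> (\<forall>i<N. Q2$$(k,i) = (\<Sum>j<K1. a k j * Q1$$(j,i)))"
proof -
  have "\<forall>k. \<exists>c. k < K2 \<longrightarrow> (\<forall>j<K1. 0 \<le> c j) \<and> (\<forall>i<N. Q2$$(k,i) = (\<Sum>j<K1. c j * Q1$$(j,i)))"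
  proof (intro allI)
    fix k
    show "\<exists>c. k < K2 \<longrightarrow> (\<forall>j<K1. 0 \<le> c j) \<and> (\<forall>i<N. Q2$$(k,i) = (\<Sum>j<K1. c j * Q1$$(j,i)))"
    proof (cases "k < K2")
      case True
      have "vec N (\<lambda>i. Q2$$(k,i)) = vec (dim_col Q2) (\<lambda>j. \<Sum>i<dim_row Q2. (if i = k then 1 else 0) * Q2$$(i,j))"
        using assms(2) True by (auto intro!: eq_vecI simp: sum_ind)
      then have "vec N (\<lambda>i. Q2$$(k,i)) \<in> cone_rows Q2" unfolding cone_rows_def
        by (intro CollectI exI[of _ "\<lambda>i. if i = k then 1 else (0::real)"]) auto
      then have "vec N (\<lambda>i. Q2$$(k,i)) \<in> cone_rows Q1" using assms(3) by blast
      then obtain c where c: "\<forall>j<K1. 0 \<le> c j" "vec N (\<lambda>i. Q2$$(k,i)) = vec N (\<lambda>j. \<Sum>i<K1. c i * Q1$$(i,j))"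
        using assms(1) unfolding cone_rows_def by auto
      have "\<forall>i<N. Q2$$(k,i) = (\<Sum>j<K1. c j * Q1$$(j,i))"
      proof (intro allI impI)
        fix i assume i: "i < N"
        have "vec N (\<lambda>i. Q2$$(k,i)) $ i = vec N (\<lambda>j. \<Sum>i<K1. c i * Q1$$(i,j)) $ i" using c(2) by simp
        then show "Q2$$(k,i) = (\<Sum>j<K1. c j * Q1$$(j,i))" using i by simp
      qed
      then show ?thesis using c(1) by blast
    qed simp
  qed
  then obtain a where "\<forall>k. k < K2 \<longrightarrow> (\<forall>j<K1. 0 \<le> a k j) \<and> (\<forall>i<N. Q2$$(k,i) = (\<Sum>j<K1. a k j * Q1$$(j,i)))"
    by metis
  then show ?thesis by blast
qed

lemma compose_id:
  fixes a b :: "nat \<Rightarrow> nat \<Rightarrow> real"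
  assumes "Q1 \<in> carrier_mat K1 N" "Q2 \<in> carrier_mat K2 N" "rows_lin_indep Q2"
  and ra: "\<forall>k<K2. \<forall>i<N. Q2$$(k,i) = (\<Sum>j<K1. a k j * Q1$$(j,i))"
  and rb: "\<forall>j<K1. \<forall>i<N. Q1$$(j,i) = (\<Sum>l<K2. b j l * Q2$$(l,i))"
  shows "\<forall>k<K2. \<forall>l<K2. (\<Sum>j<K1. a k j * b j l) = (if k = l then 1 else 0)"
proof (intro allI impI)
  fix k l assume k: "k < K2" and l: "l < K2"
  define c where "c l = (\<Sum>j<K1. a k j * b j l) - (if k = l then 1 else 0)" for l
  have "\<forall>i<dim_col Q2. (\<Sum>l<dim_row Q2. c l * Q2$$(l,i)) = 0"
  proof (intro allI impI)
    fix i assume i: "i < dim_col Q2"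
    then have iN: "i < N" using assms(2) by simp
    have "(\<Sum>l<K2. (\<Sum>j<K1. a k j * b j l) * Q2$$(l,i)) = (\<Sum>j<K1. a k j * (\<Sum>l<K2. b j l * Q2$$(l,i)))"
      by (simp add: sum_distrib_left sum_distrib_right mult.assoc sum.swap[of _ "{..<K2}"])
    also have "\<dots> = (\<Sum>j<K1. a k j * Q1$$(j,i))" using rb iN by simp
    also have "\<dots> = Q2$$(k,i)" using ra k iN by simp
    finally have e: "(\<Sum>l<K2. (\<Sum>j<K1. a k j * b j l) * Q2$$(l,i)) = Q2$$(k,i)" .
    have "(\<Sum>l<K2. c l * Q2$$(l,i)) = (\<Sum>l<K2. (\<Sum>j<K1. a k j * b j l) * Q2$$(l,i)) - (\<Sum>l<K2. (if k = l then 1 else 0) * Q2$$(l,i))"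
      unfolding c_def by (simp add: left_diff_distrib sum_subtractf)
    also have "(\<Sum>l<K2. (if k = l then 1 else 0) * Q2$$(l,i)) = Q2$$(k,i)"
      using k by (rule sum_ind)
    finally show "(\<Sum>l<dim_row Q2. c l * Q2$$(l,i)) = 0" using e assms(2) by simp
  qed
  then have "c l = 0" using assms(2,3) l unfolding rows_lin_indep_def by auto
  then show "(\<Sum>j<K1. a k j * b j l) = (if k = l then 1 else 0)" unfolding c_def by simp
qed


lemma backward_core:
  fixes a :: "nat \<Rightarrow> nat \<Rightarrow> real"
  assumes F1: "F1 \<in> carrier_mat M K" and F2: "F2 \<in> carrier_mat M K"
  and Q1: "Q1 \<in> carrier_mat K N" and Q2: "Q2 \<in> carrier_mat K N"
  and cs1: "\<forall>i<N. (\<Sum>k<K. Q1$$(k,i)) = 1" and cs2: "\<forall>i<N. (\<Sum>k<K. Q2$$(k,i)) = 1"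
  and li2: "rows_lin_indep Q2" and perm: "\<pi> permutes {..<K}"
  and pos: "\<forall>k<K. a k (\<pi> k) > 0 \<and> (\<forall>j<K. j \<noteq> \<pi> k \<longrightarrow> a k j = 0)"
  and rep: "\<forall>k<K. \<forall>i<N. Q2$$(k,i) = (\<Sum>j<K. a k j * Q1$$(j,i))"
  and FQ: "F1*Q1 = F2*Q2"
  shows "perm_equiv (F1,Q1) (F2,Q2)"
proof -
  have \<pi>K: "\<pi> k < K" if "k<K" for k using perm that by (metis lessThan_iff permutes_in_image)
  have reidx: "(\<Sum>k<K. g (\<pi> k)) = (\<Sum>j<K. g j)" for g :: "nat \<Rightarrow> real"
    using sum.reindex_bij_betw[OF permutes_imp_bij[OF perm], of g] by simp
  have Q2a: "Q2$$(k,i) = a k (\<pi> k) * Q1$$(\<pi> k,i)" if k: "k<K" and i: "i<N" for k i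
  proof -
    have "(\<Sum>j<K. a k j * Q1$$(j,i)) = (\<Sum>j<K. if j = \<pi> k then a k (\<pi> k) * Q1$$(\<pi> k,i) else 0)"
      by (rule sum.cong) (use pos k in auto)
    also have "\<dots> = a k (\<pi> k) * Q1$$(\<pi> k,i)" using \<pi>K k by simp
    finally show ?thesis using rep k i by simp
  qed
  have lam: "\<forall>k<K. a k (\<pi> k) = 1"
  proof -
    define c where "c k = 1 - 1 / a k (\<pi> k)" for k
    have "\<forall>i<dim_col Q2. (\<Sum>k<dim_row Q2. c k * Q2$$(k,i)) = 0"
    proof (intro allI impI)
      fix i assume "i < dim_col Q2" then have i: "i<N" using Q2 by simp
      have "c k * Q2$$(k,i) = Q2$$(k,i) - Q1$$(\<pi> k,i)" if k: "k<K" for k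
      proof -
        have "a k (\<pi> k) > 0" using pos k by blast
        then show ?thesis using Q2a[OF k i] unfolding c_def by (simp add: field_simps)
      qed
      then have "(\<Sum>k<K. c k * Q2$$(k,i)) = (\<Sum>k<K. Q2$$(k,i) - Q1$$(\<pi> k,i))" by simp
      also have "\<dots> = (\<Sum>k<K. Q2$$(k,i)) - (\<Sum>k<K. Q1$$(\<pi> k,i))" by (simp add: sum_subtractf)
      also have "\<dots> = 0" using cs1 cs2 i reidx[of "\<lambda>j. Q1$$(j,i)"] by simp
      finally show "(\<Sum>k<dim_row Q2. c k * Q2$$(k,i)) = 0" using Q2 by simp
    qed
    then have "\<forall>k<K. c k = 0" using li2 Q2 unfolding rows_lin_indep_def by auto
    then show ?thesis using pos unfolding c_def by (auto simp: field_simps)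
  qed
  have Qeq: "\<forall>k<K. \<forall>i<N. Q2$$(k,i) = Q1$$(\<pi> k,i)" using Q2a lam by simp
  have Feq: "F2$$(s,k) = F1$$(s,\<pi> k)" if s: "s<M" and kK: "k<K" for s k
  proof -
    define c where "c k = F2$$(s,k) - F1$$(s,\<pi> k)" for k
    have "\<forall>i<dim_col Q2. (\<Sum>k<dim_row Q2. c k * Q2$$(k,i)) = 0"
    proof (intro allI impI)
      fix i assume "i < dim_col Q2" then have i: "i<N" using Q2 by simp
      have "(F1*Q1)$$(s,i) = (\<Sum>j<K. F1$$(s,j) * Q1$$(j,i))" using mult_entry[OF F1 Q1 s i] .
      also have "\<dots> = (\<Sum>k<K. F1$$(s,\<pi> k) * Q1$$(\<pi> k,i))" using reidx[of "\<lambda>j. F1$$(s,j) * Q1$$(j,i)"] by simp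
      also have "\<dots> = (\<Sum>k<K. F1$$(s,\<pi> k) * Q2$$(k,i))" using Qeq i by simp
      finally have e1: "(F1*Q1)$$(s,i) = (\<Sum>k<K. F1$$(s,\<pi> k) * Q2$$(k,i))" .
      have e2: "(F2*Q2)$$(s,i) = (\<Sum>k<K. F2$$(s,k) * Q2$$(k,i))" using mult_entry[OF F2 Q2 s i] .
      have "(\<Sum>k<K. c k * Q2$$(k,i)) = (\<Sum>k<K. F2$$(s,k) * Q2$$(k,i)) - (\<Sum>k<K. F1$$(s,\<pi> k) * Q2$$(k,i))"
        unfolding c_def by (simp add: left_diff_distrib sum_subtractf)
      also have "\<dots> = 0" using e1 e2 FQ by simp
      finally show "(\<Sum>k<dim_row Q2. c k * Q2$$(k,i)) = 0" using Q2 by simp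
    qed
    then have "\<forall>k<K. c k = 0" using li2 Q2 unfolding rows_lin_indep_def by auto
    then show ?thesis using kK unfolding c_def by simp
  qed
  show ?thesis unfolding perm_equiv_def using F1 F2 Q1 perm Feq Qeq by auto
qed


lemma forward_b:
  assumes A3: "\<M> \<subseteq> {(F,Q). \<exists>K\<ge>1. F \<in> Fset M K \<and> Q \<in> Qset K N}"
  and A4: "\<forall>(F,Q)\<in>\<M>. dim_col F < M"
  and A5: "\<forall>(F,Q)\<in>\<M>. \<forall>F'\<in>Fan M (dim_col F). (F',Q) \<in> \<M>"
  and idf: "identifiable \<M>" and mem: "(F,Q) \<in> \<M>"
  shows "rows_lin_indep Q"
proof (rule ccontr)
  assume nl: "\<not> rows_lin_indep Q"
  obtain K where K: "F \<in> Fset M K" "Q \<in> Qset K N" using A3 mem by auto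
  have FK: "F \<in> carrier_mat M K" and QK: "Q \<in> carrier_mat K N" using K unfolding Fset_def Qset_def by auto
  have KM: "K < M" using A4 mem FK by auto
  obtain c k0 where c: "\<forall>j<N. (\<Sum>k<K. c k * Q$$(k,j)) = 0" and k0: "k0 < K" "c k0 \<noteq> 0"
    using nl QK unfolding rows_lin_indep_def by auto
  define S where "S = (\<Sum>k<K. \<bar>c k\<bar>)"
  define \<epsilon> where "\<epsilon> = 1 / (2 * (1 + S))"
  have S0: "S \<ge> 0" unfolding S_def by (simp add: sum_nonneg)
  have \<epsilon>0: "\<epsilon> > 0" unfolding \<epsilon>_def using S0 by simp
  have \<epsilon>c: "\<bar>\<epsilon> * c k\<bar> \<le> 1/2" if "k<K" for k
  proof -
    have "\<bar>c k\<bar> \<le> S" unfolding S_def using that by (intro member_le_sum) auto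
    then have "\<bar>c k\<bar> \<le> 1 + S" by simp
    then have "\<epsilon> * \<bar>c k\<bar> \<le> 1/2" unfolding \<epsilon>_def using S0 by (simp add: field_simps)
    then show ?thesis using \<epsilon>0 by (simp add: abs_mult)
  qed
  define G where "G t = mat M K (\<lambda>(s,k). if s<K then (if s=k then 1/2 else 0) else 1/2 + t * c k)" for t :: real
  have Gc: "G t \<in> carrier_mat M K" for t unfolding G_def by simp
  have Gfan: "G t \<in> Fan M K" if tc: "\<forall>k<K. \<bar>t * c k\<bar> \<le> 1/2" for t
  proof -
    have "G t \<in> Fset M K" unfolding Fset_def G_def using tc by (auto simp: abs_le_iff)
    moreover have "\<forall>k<K. \<exists>s<M. G t $$ (s,k) > 0 \<and> (\<forall>l<K. l \<noteq> k \<longrightarrow> G t $$ (s,l) = 0)"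
    proof (intro allI impI)
      fix k assume k: "k < K"
      then have "k < M" using KM by simp
      then show "\<exists>s<M. G t $$ (s,k) > 0 \<and> (\<forall>l<K. l \<noteq> k \<longrightarrow> G t $$ (s,l) = 0)"
        using k by (intro exI[of _ k]) (auto simp: G_def)
    qed
    ultimately show ?thesis unfolding Fan_def by blast
  qed
  have dF: "dim_col F = K" using FK by simp
  have G0: "(G 0, Q) \<in> \<M>" using A5 mem Gfan[of 0] dF by auto
  have Ge: "(G \<epsilon>, Q) \<in> \<M>" using A5 mem Gfan[of \<epsilon>] \<epsilon>c dF by auto
  have GQ: "G 0 * Q = G \<epsilon> * Q"
  proof (rule eq_matI)
    fix s i assume s: "s < dim_row (G \<epsilon> * Q)" and i: "i < dim_col (G \<epsilon> * Q)"
    then have s: "s<M" and i: "i<N" using QK Gc[of \<epsilon>] by auto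
    have e: "(G t * Q)$$(s,i) = (\<Sum>k<K. G t $$ (s,k) * Q$$(k,i))" for t
      using mult_entry[OF Gc[of t] QK s i] .
    show "(G 0 * Q) $$ (s,i) = (G \<epsilon> * Q) $$ (s,i)"
    proof (cases "s<K")
      case True
      have "(\<Sum>k<K. G 0 $$ (s,k) * Q$$(k,i)) = (\<Sum>k<K. G \<epsilon> $$ (s,k) * Q$$(k,i))"
        by (rule sum.cong) (use True s in \<open>auto simp: G_def\<close>)
      then show ?thesis using e by simp
    next
      case False
      have g: "(\<Sum>k<K. G t $$ (s,k) * Q$$(k,i)) = (\<Sum>k<K. (1/2) * Q$$(k,i)) + t * (\<Sum>k<K. c k * Q$$(k,i))" for t
      proof -
        have "(\<Sum>k<K. G t $$ (s,k) * Q$$(k,i)) = (\<Sum>k<K. (1/2) * Q$$(k,i) + t * (c k * Q$$(k,i)))"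
          by (rule sum.cong) (use False s in \<open>auto simp: G_def algebra_simps\<close>)
        then show ?thesis by (simp add: sum.distrib sum_distrib_left)
      qed
      show ?thesis using e g c i by simp
    qed
  qed (simp_all add: G_def)
  then have "perm_equiv (G 0, Q) (G \<epsilon>, Q)" using idf G0 Ge unfolding identifiable_def by blast
  then obtain \<pi> where \<pi>: "\<pi> permutes {..<K}" "\<forall>s<M. \<forall>k<K. G \<epsilon> $$ (s,k) = G 0 $$ (s, \<pi> k)"
    unfolding perm_equiv_def using Gc[of 0] by auto
  have pk: "\<pi> k0 < K" using \<pi>(1) k0 by (metis lessThan_iff permutes_in_image)
  have "G \<epsilon> $$ (K,k0) = G 0 $$ (K, \<pi> k0)" using \<pi>(2) KM k0 by blast
  then have "1/2 + \<epsilon> * c k0 = 1/2" using KM k0 pk by (simp add: G_def)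
  then show False using \<epsilon>0 k0 by simp
qed

lemma forward_a:
  assumes A3: "\<M> \<subseteq> {(F,Q). \<exists>K\<ge>1. F \<in> Fset M K \<and> Q \<in> Qset K N}"
  and idf: "identifiable \<M>" and m1: "(F1,Q1) \<in> \<M>" and m2: "(F2,Q2) \<in> \<M>" and FQ: "F1 * Q1 = F2 * Q2"
  shows "cone_rows Q1 = cone_rows Q2"
proof -
  obtain K1 where K1: "F1 \<in> carrier_mat M K1" "Q1 \<in> carrier_mat K1 N"
    using A3 m1 unfolding Fset_def Qset_def by blast
  obtain K2 where K2: "F2 \<in> carrier_mat M K2" "Q2 \<in> carrier_mat K2 N"
    using A3 m2 unfolding Fset_def Qset_def by blast
  have "perm_equiv (F1,Q1) (F2,Q2)" using idf m1 m2 FQ unfolding identifiable_def by blast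
  then obtain \<pi> where KK: "K1 = K2" and \<pi>: "\<pi> permutes {..<K1}"
    and qe: "\<forall>k<K1. \<forall>i<dim_col Q1. Q2$$(k,i) = Q1$$(\<pi> k,i)"
    unfolding perm_equiv_def using K1 K2 by auto
  have s1: "cone_rows Q1 \<subseteq> cone_rows Q2"
    by (rule cone_sub[OF \<pi>]) (use K1 K2 KK qe in auto)
  have qe2: "\<forall>k<K1. \<forall>i<dim_col Q2. Q1$$(k,i) = Q2$$(Hilbert_Choice.inv \<pi> k,i)"
  proof (intro allI impI)
    fix k i assume k: "k < K1" and i: "i < dim_col Q2"
    have "Hilbert_Choice.inv \<pi> k < K1" using permutes_inv[OF \<pi>] k by (metis lessThan_iff permutes_in_image)
    then have "Q2$$(Hilbert_Choice.inv \<pi> k,i) = Q1$$(\<pi> (Hilbert_Choice.inv \<pi> k),i)" using qe i K1 K2 by auto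
    then show "Q1$$(k,i) = Q2$$(Hilbert_Choice.inv \<pi> k,i)" using permutes_inverses(1)[OF \<pi>] by simp
  qed
  have s2: "cone_rows Q2 \<subseteq> cone_rows Q1"
    by (rule cone_sub[OF permutes_inv[OF \<pi>]]) (use K1 K2 KK qe2 in auto)
  show ?thesis using s1 s2 by blast
qed

theorem mainTheorem6:
  fixes M N :: nat and \<M> :: "(real mat \<times> real mat) set"
  assumes "0 < M" and "0 < N"
    and "\<M> \<subseteq> {(F,Q). \<exists>K\<ge>1. F \<in> Fset M K \<and> Q \<in> Qset K N}"
    and "\<forall>(F,Q)\<in>\<M>. dim_col F < M"
    and "\<forall>(F,Q)\<in>\<M>. \<forall>F'\<in>Fan M (dim_col F). (F',Q) \<in> \<M>"
  shows "identifiable \<M> \<longleftrightarrow>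
     ((\<forall>F1 Q1 F2 Q2. (F1,Q1) \<in> \<M> \<longrightarrow> (F2,Q2) \<in> \<M> \<longrightarrow>
         F1 * Q1 = F2 * Q2 \<longrightarrow> cone_rows Q1 = cone_rows Q2) \<and>
      (\<forall>(F,Q)\<in>\<M>. rows_lin_indep Q))"
proof
  assume idf: "identifiable \<M>"
  show "(\<forall>F1 Q1 F2 Q2. (F1,Q1) \<in> \<M> \<longrightarrow> (F2,Q2) \<in> \<M> \<longrightarrow>
         F1 * Q1 = F2 * Q2 \<longrightarrow> cone_rows Q1 = cone_rows Q2) \<and>
      (\<forall>(F,Q)\<in>\<M>. rows_lin_indep Q)"
    using forward_a[OF assms(3) idf] forward_b[OF assms(3,4,5) idf] by blast
next
  assume rhs: "(\<forall>F1 Q1 F2 Q2. (F1,Q1) \<in> \<M> \<longrightarrow> (F2,Q2) \<in> \<M> \<longrightarrow>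
         F1 * Q1 = F2 * Q2 \<longrightarrow> cone_rows Q1 = cone_rows Q2) \<and>
      (\<forall>(F,Q)\<in>\<M>. rows_lin_indep Q)"
  show "identifiable \<M>" unfolding identifiable_def
  proof (intro allI impI)
    fix F1 Q1 F2 Q2 assume m1: "(F1,Q1) \<in> \<M>" and m2: "(F2,Q2) \<in> \<M>" and FQ: "F1 * Q1 = F2 * Q2"
    obtain K1 where K1: "F1 \<in> carrier_mat M K1" "Q1 \<in> carrier_mat K1 N" "\<forall>i<N. (\<Sum>k<K1. Q1$$(k,i)) = 1"
      using assms(3) m1 unfolding Fset_def Qset_def by blast
    obtain K2 where K2: "F2 \<in> carrier_mat M K2" "Q2 \<in> carrier_mat K2 N" "\<forall>i<N. (\<Sum>k<K2. Q2$$(k,i)) = 1"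
      using assms(3) m2 unfolding Fset_def Qset_def by blast
    have ce: "cone_rows Q1 = cone_rows Q2" using rhs m1 m2 FQ by blast
    have li1: "rows_lin_indep Q1" and li2: "rows_lin_indep Q2" using rhs m1 m2 by auto
    obtain a where a: "\<forall>k<K2. (\<forall>j<K1. 0 \<le> a k j) \<and> (\<forall>i<N. Q2$$(k,i) = (\<Sum>j<K1. a k j * Q1$$(j,i)))"
      using row_in_cone[OF K1(2) K2(2)] ce by blast
    obtain b where b: "\<forall>j<K1. (\<forall>l<K2. 0 \<le> b j l) \<and> (\<forall>i<N. Q1$$(j,i) = (\<Sum>l<K2. b j l * Q2$$(l,i)))"
      using row_in_cone[OF K2(2) K1(2)] ce by blast
    have ra: "\<forall>k<K2. \<forall>i<N. Q2$$(k,i) = (\<Sum>j<K1. a k j * Q1$$(j,i))" using a by blast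
    have rb: "\<forall>j<K1. \<forall>i<N. Q1$$(j,i) = (\<Sum>l<K2. b j l * Q2$$(l,i))" using b by blast
    have AB: "\<forall>k<K2. \<forall>l<K2. (\<Sum>j<K1. a k j * b j l) = (if k = l then 1 else 0)"
      using compose_id[OF K1(2) K2(2) li2 ra rb] .
    have BA: "\<forall>j<K1. \<forall>j'<K1. (\<Sum>l<K2. b j l * a l j') = (if j = j' then 1 else 0)"
      using compose_id[OF K2(2) K1(2) li1 rb ra] .
    have a0: "\<forall>k<K2. \<forall>j<K1. 0 \<le> a k j" using a by blast
    have b0: "\<forall>j<K1. \<forall>l<K2. 0 \<le> b j l" using b by blast
    obtain \<pi> where KK: "K1 = K2" and \<pi>: "\<pi> permutes {..<K2}"
      and pos: "\<forall>k<K2. a k (\<pi> k) > 0 \<and> (\<forall>j<K2. j \<noteq> \<pi> k \<longrightarrow> a k j = 0)"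
      using comb[OF a0 b0 AB BA] by blast
    show "perm_equiv (F1,Q1) (F2,Q2)"
      by (rule backward_core[of F1 M K2 F2 Q1 N Q2 \<pi> a])
         (use K1 K2 KK \<pi> pos ra li2 FQ in auto)
  qed
qed

end
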